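(* Let $n\ge1$ and consider the block decomposition $\{X_j\}_{j\le n}$ of $\mathbb R^n$ with the metric $d_1$. Then for every nonempty $J\subseteq\{0,1,\dots,n\}$ and every $R>0$, $$\bigcap_{j\in J}N_1(X_j,R)\subseteq N_1\Big(\bigcap_{j\in J}X_j,nR\Big);$$ in particular the block decomposition is coarsely excisive for $d_1$.
   Context: $d_1(x,y)=\sum_{j<n}|x_j-y_j|$ on $\mathbb R^n$ and $N_1(Y,R)=\{x:\inf_{y\in Y}d_1(x,y)\le R\}$. The block decomposition of $\mathbb R^n$ consists of the $n+1$ sets $X_0=(-\infty,0]\times\mathbb R^{n-1}$, $X_j=[0,\infty)^j\times(-\infty,0]\times\mathbb R^{n-j-1}$ for $0<j<n$, and $X_n=[0,\infty)^n$. *)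

theory Defs
  imports "HOL-Analysis.Analysis"
begin

text \<open>Points of R^n are represented as functions nat => real vanishing at indices >= n;
  coordinates are x 0, ..., x (n-1).\<close>

definition Rn :: "nat \<Rightarrow> (nat \<Rightarrow> real) set" where
  "Rn n = {x. \<forall>i\<ge>n. x i = 0}"

definition d1 :: "nat \<Rightarrow> (nat \<Rightarrow> real) \<Rightarrow> (nat \<Rightarrow> real) \<Rightarrow> real" where
  "d1 n x y = (\<Sum>j<n. \<bar>x j - y j\<bar>)"

definition N1 :: "nat \<Rightarrow> (nat \<Rightarrow> real) set \<Rightarrow> real \<Rightarrow> (nat \<Rightarrow> real) set" where
  "N1 n Y R = {x \<in> Rn n. Inf (d1 n x ` Y) \<le> R}"

definition block :: "nat \<Rightarrow> nat \<Rightarrow> (nat \<Rightarrow> real) set" where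
  "block n j = {x \<in> Rn n. (\<forall>i<j. 0 \<le> x i) \<and> (j < n \<longrightarrow> x j \<le> 0)}"

end

theory Submission
  imports Defs
begin

definition fj :: "nat \<Rightarrow> nat \<Rightarrow> (nat \<Rightarrow> real) \<Rightarrow> real" where
  "fj n j x = (\<Sum>i<n. if i < j then max (- x i) 0 else if i = j then max (x i) 0 else 0)"

lemma fj_le_d1:
  assumes "y \<in> block n j" shows "fj n j x \<le> d1 n x y"
  unfolding fj_def d1_def
proof (rule sum_mono)
  fix i assume "i \<in> {..<n}"
  with assms show "(if i < j then max (- x i) 0 else if i = j then max (x i) 0 else 0) \<le> \<bar>x i - y i\<bar>"
    unfolding block_def by auto
qed

lemma fj_le_R:
  assumes "x \<in> N1 n (block n j) R"
  shows "fj n j x \<le> R"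
proof -
  have ne: "block n j \<noteq> {}" by (auto simp: block_def Rn_def intro!: exI[of _ "\<lambda>_. 0"])
  have "fj n j x \<le> Inf (d1 n x ` block n j)"
    using ne fj_le_d1 by (auto intro!: cInf_greatest)
  with assms show ?thesis unfolding N1_def by auto
qed

lemma pos_le_fj:
  assumes "j < n" shows "max (x j) 0 \<le> fj n j x"
proof -
  have "max (x j) 0 = (if j < j then max (- x j) 0 else if j = j then max (x j) 0 else 0)" by simp
  also have "\<dots> \<le> fj n j x" unfolding fj_def
    by (rule member_le_sum) (use assms in auto)
  finally show ?thesis .
qed

theorem proposition5p6p17:
  fixes n :: nat and J :: "nat set" and R :: real
  assumes "1 \<le> n" and "J \<subseteq> {..n}" and "J \<noteq> {}" and "0 < R"
  shows "(\<Inter>j\<in>J. N1 n (block n j) R) \<subseteq> N1 n (\<Inter>j\<in>J. block n j) (real n * R)"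
proof
  fix x assume x: "x \<in> (\<Inter>j\<in>J. N1 n (block n j) R)"
  have fin: "finite J" using assms(2) finite_subset by blast
  define M where "M = Max J"
  have MJ: "M \<in> J" using fin assms(3) M_def by simp
  have leM: "\<And>j. j \<in> J \<Longrightarrow> j \<le> M" using fin M_def by simp
  have Mn: "M \<le> n" using MJ assms(2) by auto
  have xR: "x \<in> Rn n" using x assms(3) by (auto simp: N1_def)
  have fR: "\<And>j. j \<in> J \<Longrightarrow> fj n j x \<le> R" using x fj_le_R by blast
  define y where "y i = (if i < n then (if i \<in> J \<and> i < M then 0 else if i < M then max (x i) 0
      else if i = M then min (x i) 0 else x i) else 0)" for i
  have yI: "y \<in> (\<Inter>j\<in>J. block n j)"
  proof
    fix j assume j: "j \<in> J"
    have "j \<le> M" using leM j by simp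
    then show "y \<in> block n j" using j unfolding block_def Rn_def y_def by auto
  qed
  define S where "S = (\<Sum>j\<in>J-{M}. max (x j) 0)"
  have d: "d1 n x y = fj n M x + S"
  proof -
    have "d1 n x y = (\<Sum>i<n. (if i < M then max (- x i) 0 else if i = M then max (x i) 0 else 0)
        + (if i \<in> J - {M} then max (x i) 0 else 0))"
      unfolding d1_def
    proof (rule sum.cong[OF refl])
      fix i assume "i \<in> {..<n}"
      then show "\<bar>x i - y i\<bar> = (if i < M then max (- x i) 0 else if i = M then max (x i) 0 else 0)
        + (if i \<in> J - {M} then max (x i) 0 else 0)"
        unfolding y_def using leM by (cases "i \<in> J"; cases "i < M"; cases "i = M"; (auto simp: max_def min_def dest: leM))
    qed
    also have "\<dots> = fj n M x + (\<Sum>i<n. if i \<in> J - {M} then max (x i) 0 else 0)"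
      unfolding fj_def sum.distrib ..
    also have "(\<Sum>i<n. if i \<in> J - {M} then max (x i) 0 else 0) = S"
    proof -
      have sub: "J - {M} \<subseteq> {..<n}" using leM Mn by fastforce
      have "(\<Sum>i<n. if i \<in> J - {M} then max (x i) 0 else 0) = (\<Sum>i\<in>{..<n} \<inter> (J-{M}). max (x i) 0)"
        by (simp add: sum.inter_restrict)
      also have "{..<n} \<inter> (J-{M}) = J - {M}" using sub by blast
      finally show ?thesis unfolding S_def .
    qed
    finally show ?thesis .
  qed
  have posR: "\<And>j. j \<in> J - {M} \<Longrightarrow> max (x j) 0 \<le> R"
  proof -
    fix j assume j: "j \<in> J - {M}"
    then have "j < n" using leM Mn by fastforce
    then show "max (x j) 0 \<le> R" using pos_le_fj fR j by (meson DiffD1 order_trans)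
  qed
  have S1: "S \<le> real (card (J - {M})) * R"
    unfolding S_def using posR sum_bounded_above[of "J-{M}" "\<lambda>j. max (x j) 0" R] by simp
  have cJ: "card (J - {M}) = card J - 1" using MJ fin by simp
  have cJn: "card J \<le> Suc n" using card_mono[OF _ assms(2)] by simp
  have bound: "d1 n x y \<le> real n * R"
  proof (cases "card J \<le> n")
    case True
    have "d1 n x y \<le> R + real (card J - 1) * R" using d fR[OF MJ] S1 cJ by simp
    also have "\<dots> = real (card J) * R"
      using True fin assms(3) by (cases "card J") (auto simp: algebra_simps)
    also have "\<dots> \<le> real n * R" using True assms(4) by simp
    finally show ?thesis .
  next
    case False
    then have cs: "card J = Suc n" using cJn by simp
    have Jeq: "J = {..n}" using card_subset_eq[OF _ assms(2)] cs by simp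
    then have MnE: "M = n" using M_def by (simp add: Max_eq_iff)
    show ?thesis
    proof (cases "\<exists>k<n. x k < 0")
      case True
      then obtain k where k: "k < n" "x k < 0" by blast
      have kin: "k \<in> J - {M}" using k Jeq MnE by simp
      have "S = max (x k) 0 + (\<Sum>j\<in>J-{M}-{k}. max (x j) 0)"
        unfolding S_def using kin fin by (simp add: sum.remove)
      also have "\<dots> = (\<Sum>j\<in>J-{M}-{k}. max (x j) 0)" using k by simp
      also have "\<dots> \<le> real (card (J-{M}-{k})) * R"
        using posR sum_bounded_above[of "J-{M}-{k}" "\<lambda>j. max (x j) 0" R] using assms(4) by simp
      also have "card (J-{M}-{k}) = n - 1" using kin fin cJ cs by simp
      finally have "S \<le> real (n - 1) * R" .
      then have "d1 n x y \<le> R + real (n-1) * R" using d fR[OF MJ] by simp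
      also have "\<dots> = real n * R" using assms(1) by (cases n) (auto simp: algebra_simps)
      finally show ?thesis .
    next
      case False
      have "fj n M x = 0" unfolding fj_def MnE using False
        by (intro sum.neutral) (auto simp: max_def)
      then have "d1 n x y \<le> real (card J - 1) * R" using d S1 cJ by simp
      then show ?thesis using cs by simp
    qed
  qed
  have "Inf (d1 n x ` (\<Inter>j\<in>J. block n j)) \<le> d1 n x y"
  proof (rule cInf_lower)
    show "d1 n x y \<in> d1 n x ` (\<Inter>j\<in>J. block n j)" using yI by blast
    show "bdd_below (d1 n x ` (\<Inter>j\<in>J. block n j))"
      by (rule bdd_belowI[of _ 0]) (auto simp: d1_def intro: sum_nonneg)
  qed
  with bound xR show "x \<in> N1 n (\<Inter>j\<in>J. block n j) (real n * R)"
    unfolding N1_def by auto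
qed

end
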